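(* For all integers $0 \le p \le q$, $$F_{p,q}(x) \;=\; (1+x)^p \sum_{k=0}^{q} \binom{q}{k}\binom{p+k}{k} x^k.$$
   Context: Let $\mathbb{N} = \{0,1,2,\dots\}$. For $(p,q) \in \mathbb{N}^2$ and $n \in \mathbb{N}$, an unrestricted generalized jump path of length $n$ starting at $(p,q)$ is a sequence $(x_0, \dots, x_n)$ of points of $\mathbb{N}^2$ satisfying three conditions: - $x_0 = (p,q)$; - for every $i$, each coordinate of $x_{i+1}$ is at most the corresponding coordinate of $x_i$; - $x_{i+1} \ne x_i$ for every $i$. Let $u((p,q),n)$ denote the number of such paths. Define the polynomial $$F_{p,q}(x) = \sum_{k=0}^{p+q} u((p,q),k)\, x^k.$$ *)

theory Defs
  imports Main "HOL-Computational_Algebra.Polynomial"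
begin

definition jump_step :: "nat \<times> nat \<Rightarrow> nat \<times> nat \<Rightarrow> bool" where
  "jump_step a b \<longleftrightarrow> fst b \<le> fst a \<and> snd b \<le> snd a \<and> b \<noteq> a"

definition jump_paths :: "nat \<times> nat \<Rightarrow> nat \<Rightarrow> (nat \<times> nat) list set" where
  "jump_paths s n = {xs. length xs = Suc n \<and> xs ! 0 = s \<and>
      (\<forall>i<n. jump_step (xs ! i) (xs ! Suc i))}"

definition u :: "nat \<times> nat \<Rightarrow> nat \<Rightarrow> nat" where
  "u s n = card (jump_paths s n)"

definition F :: "nat \<Rightarrow> nat \<Rightarrow> int poly" where
  "F p q = (\<Sum>k = 0..p + q. monom (int (u (p, q) k)) k)"

end

theory Submission
  imports Defs
begin

lemma jp0: "jump_paths s 0 = {[s]}"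
  unfolding jump_paths_def by (auto simp: length_Suc_conv)

lemma jpSuc: "jump_paths s (Suc n) = (\<Union>t\<in>{t. jump_step s t}. (#) s ` jump_paths t n)"
proof (intro equalityI subsetI)
  fix xs assume "xs \<in> jump_paths s (Suc n)"
  then have l: "length xs = Suc (Suc n)" and h: "xs!0 = s"
    and st: "\<forall>i<Suc n. jump_step (xs!i) (xs!Suc i)" by (auto simp: jump_paths_def)
  from l obtain y ys where xs: "xs = y # ys" by (cases xs) auto
  have "\<forall>i<n. jump_step (ys!i) (ys!Suc i)"
  proof (intro allI impI)
    fix i assume "i < n"
    then have "jump_step (xs!Suc i) (xs!Suc (Suc i))" using st by auto
    then show "jump_step (ys!i) (ys!Suc i)" using xs by simp
  qed
  then have "ys \<in> jump_paths (ys!0) n" using l xs unfolding jump_paths_def by auto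
  moreover have "jump_step s (ys!0)" using st[rule_format, of 0] h xs by simp
  ultimately have "xs \<in> (#) s ` jump_paths (ys!0) n" and "ys!0 \<in> {t. jump_step s t}" using h xs by auto
  then show "xs \<in> (\<Union>t\<in>{t. jump_step s t}. (#) s ` jump_paths t n)" by blast
next
  fix xs assume "xs \<in> (\<Union>t\<in>{t. jump_step s t}. (#) s ` jump_paths t n)"
  then obtain t ys where "jump_step s t" "ys \<in> jump_paths t n" "xs = s # ys" by auto
  then show "xs \<in> jump_paths s (Suc n)" unfolding jump_paths_def
    by (auto simp: less_Suc_eq_0_disj)
qed

lemma steps_eq: "{t. jump_step s t} = ({..fst s} \<times> {..snd s}) - {s}"
  unfolding jump_step_def by auto

lemma fin_jp: "finite (jump_paths s n)"
proof (induction n arbitrary: s)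
  case 0 then show ?case by (simp add: jp0)
next
  case (Suc n) then show ?case unfolding jpSuc steps_eq by auto
qed

lemma uSuc: "u s (Suc n) = (\<Sum>t\<in>({..fst s} \<times> {..snd s}) - {s}. u t n)"
proof -
  have "u s (Suc n) = card (\<Union>t\<in>({..fst s} \<times> {..snd s}) - {s}. (#) s ` jump_paths t n)"
    unfolding u_def jpSuc steps_eq ..
  also have "\<dots> = (\<Sum>t\<in>({..fst s} \<times> {..snd s}) - {s}. card ((#) s ` jump_paths t n))"
  proof (rule card_UN_disjoint)
    show "\<forall>i\<in>{..fst s} \<times> {..snd s} - {s}. \<forall>j\<in>{..fst s} \<times> {..snd s} - {s}. i \<noteq> j \<longrightarrow>
        (#) s ` jump_paths i n \<inter> (#) s ` jump_paths j n = {}"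
      by (auto simp: jump_paths_def)
  qed (auto simp: fin_jp)
  also have "\<dots> = (\<Sum>t\<in>({..fst s} \<times> {..snd s}) - {s}. u t n)"
    unfolding u_def by (intro sum.cong refl card_image) (auto simp: inj_on_def)
  finally show ?thesis .
qed

lemma u0: "u s 0 = 1"
  by (simp add: u_def jp0)

lemma u_vanish: "n > fst s + snd s \<Longrightarrow> u s n = 0"
proof (induction n arbitrary: s)
  case 0 then show ?case by simp
next
  case (Suc n)
  have "u t n = 0" if "t \<in> ({..fst s} \<times> {..snd s}) - {s}" for t
    using that Suc by (intro Suc.IH) (cases t; cases s; auto)
  then show ?case unfolding uSuc by simp
qed

lemma coeff_F: "coeff (F p q) n = int (u (p,q) n)"
proof (cases "n \<le> p + q")
  case True
  then show ?thesis unfolding F_def coeff_sum coeff_monom by (simp add: sum.delta)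
next
  case False
  then show ?thesis unfolding F_def coeff_sum coeff_monom using u_vanish[of "(p,q)" n] by simp
qed

definition GF :: "nat \<Rightarrow> nat \<Rightarrow> int poly" where
  "GF p q = (\<Sum>a\<le>p. \<Sum>b\<le>q. F a b)"

lemma X1mult: "[:1,1:] * P = P + pCons 0 (P::int poly)"
  by (simp add: mult_pCons_left)

lemma usum: "int (u (p,q) (Suc m)) + int (u (p,q) m) = (\<Sum>a\<le>p. \<Sum>b\<le>q. int (u (a,b) m))"
proof -
  have "(\<Sum>a\<le>p. \<Sum>b\<le>q. int (u (a,b) m)) = (\<Sum>t\<in>{..p}\<times>{..q}. int (u t m))"
    by (simp add: sum.cartesian_product)
  also have "\<dots> = int (u (p,q) m) + (\<Sum>t\<in>{..p}\<times>{..q} - {(p,q)}. int (u t m))"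
    by (rule sum.remove) auto
  also have "(\<Sum>t\<in>{..p}\<times>{..q} - {(p,q)}. int (u t m)) = int (u (p,q) (Suc m))"
    using uSuc[of "(p,q)" m] by simp
  finally show ?thesis by simp
qed

lemma key: "[:1,1:] * F p q = 1 + pCons 0 (GF p q)"
proof (rule poly_eqI)
  fix n show "coeff ([:1,1:] * F p q) n = coeff (1 + pCons 0 (GF p q)) n"
  proof (cases n)
    case 0 then show ?thesis by (simp add: X1mult coeff_F u0)
  next
    case (Suc m) then show ?thesis
      using usum[of p q m] by (simp add: X1mult coeff_F GF_def coeff_sum)
  qed
qed

lemma pC: "pCons 0 P = [:0,1:] * (P::int poly)"
  by (simp add: mult_pCons_left)

lemma X1: "[:1,1:] = 1 + [:0,1::int:]"
  by (simp add: one_pCons)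

lemma g1: fixes A B G y :: "'a::comm_ring_1"
  assumes "A = 1 + y*(G + A) - y*A" "B = 1 + y*G - y*B" shows "A = (1+y)*B"
proof -
  have "A = 1 + y*G" using assms(1) by (simp add: algebra_simps)
  then show ?thesis using assms(2) by (simp add: algebra_simps)
qed
lemma g2: fixes A B C D G1 G2 G3 y :: "'a::comm_ring_1"
  assumes "A = 1 + y*(G1 + G2 - G3 + A) - y*A" "B = 1 + y*G1 - y*B" "C = 1 + y*G2 - y*C" "D = 1 + y*G3 - y*D"
  shows "A = (1+y)*(B + C - D)"
proof -
  have "A = 1 + y*(G1 + G2 - G3)" using assms(1) by (simp add: algebra_simps)
  moreover have "(1+y)*B = 1 + y*G1" "(1+y)*C = 1 + y*G2" "(1+y)*D = 1 + y*G3"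
    using assms(2-4) by (simp_all add: algebra_simps)
  moreover have "(1+y)*(B+C-D) = (1+y)*B + (1+y)*C - (1+y)*D" by (simp add: algebra_simps)
  ultimately show ?thesis by (simp add: algebra_simps)
qed

lemma keyY: "F p q = 1 + [:0,1:] * GF p q - [:0,1:] * F p q"
proof -
  have "F p q + [:0,1:] * F p q = 1 + [:0,1:] * GF p q"
    using key[of p q] unfolding X1mult pC[of "F p q"] pC[of "GF p q"] .
  moreover have "\<And>a b c::int poly. a + b = c \<Longrightarrow> a = c - b" by (simp add: eq_diff_eq)
  ultimately show ?thesis by blast
qed

lemma GF00: "GF 0 0 = F 0 0" by (simp add: GF_def)
lemma GF0S: "GF 0 (Suc b) = GF 0 b + F 0 (Suc b)" by (simp add: GF_def)
lemma GFS0: "GF (Suc a) 0 = GF a 0 + F (Suc a) 0" by (simp add: GF_def)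
lemma GFSS: "GF (Suc a) (Suc b) = GF a (Suc b) + GF (Suc a) b - GF a b + F (Suc a) (Suc b)"
proof -
  have h1: "(\<Sum>x\<le>Suc a. \<Sum>y\<le>Suc b. F x y) = (\<Sum>x\<le>a. \<Sum>y\<le>Suc b. F x y) + (\<Sum>y\<le>Suc b. F (Suc a) y)"
    by (rule sum.atMost_Suc)
  have h2: "(\<Sum>x\<le>Suc a. \<Sum>y\<le>b. F x y) = (\<Sum>x\<le>a. \<Sum>y\<le>b. F x y) + (\<Sum>y\<le>b. F (Suc a) y)"
    by (rule sum.atMost_Suc)
  have h3: "(\<Sum>y\<le>Suc b. F (Suc a) y) = (\<Sum>y\<le>b. F (Suc a) y) + F (Suc a) (Suc b)"
    by (rule sum.atMost_Suc)
  have gen: "\<And>X Y A B S1 S2 f::int poly. X = A + S1 \<Longrightarrow> Y = B + S2 \<Longrightarrow> S1 = S2 + f \<Longrightarrow> X = A + Y - B + f"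
    by simp
  show ?thesis unfolding GF_def by (rule gen[OF h1 h2 h3])
qed

lemma F00: "F 0 0 = 1"
proof -
  have "F 0 0 = 1 + [:0,1:] * F 0 0 - [:0,1:] * F 0 0" using keyY[of 0 0] unfolding GF00 .
  then show ?thesis by (metis add_diff_cancel)
qed

lemma F0S: "F 0 (Suc b) = [:1,1:] * F 0 b"
  unfolding X1 by (rule g1[OF keyY[of 0 "Suc b", unfolded GF0S] keyY[of 0 b]])

lemma FS0: "F (Suc a) 0 = [:1,1:] * F a 0"
  unfolding X1 by (rule g1[OF keyY[of "Suc a" 0, unfolded GFS0] keyY[of a 0]])

lemma FSS: "F (Suc a) (Suc b) = [:1,1:] * (F a (Suc b) + F (Suc a) b - F a b)"
  unfolding X1 by (rule g2[OF keyY[of "Suc a" "Suc b", unfolded GFSS] keyY[of a "Suc b"] keyY[of "Suc a" b] keyY[of a b]])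


definition S :: "nat \<Rightarrow> nat \<Rightarrow> int poly" where
  "S p q = (\<Sum>k = 0..q. monom (int ((q choose k) * ((p + k) choose k))) k)"

lemma coeff_S: "coeff (S p q) n = int (q choose n) * int ((p + n) choose n)"
proof (cases "n \<le> q")
  case True
  then show ?thesis unfolding S_def coeff_sum coeff_monom by (simp add: sum.delta)
next
  case False
  then show ?thesis unfolding S_def coeff_sum coeff_monom by simp
qed

lemma coeff_X1: "coeff ([:1,1:] * (P::int poly)) n = coeff P n + (case n of 0 \<Rightarrow> 0 | Suc m \<Rightarrow> coeff P m)"
  unfolding X1mult by (simp add: coeff_pCons split: nat.split)

lemma S0: "S p 0 = 1"
  by (simp add: S_def)

lemma SA: "S 0 (Suc b) = [:1,1:] * S 0 b"
proof (rule poly_eqI)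
  fix n show "coeff (S 0 (Suc b)) n = coeff ([:1,1:] * S 0 b) n"
    unfolding coeff_X1 coeff_S by (cases n) auto
qed

lemma SB: "S (Suc a) (Suc b) = S a (Suc b) + [:1,1:] * S (Suc a) b - S a b"
proof (rule poly_eqI)
  fix n show "coeff (S (Suc a) (Suc b)) n = coeff (S a (Suc b) + [:1,1:] * S (Suc a) b - S a b) n"
  proof (cases n)
    case 0 then show ?thesis by (simp add: coeff_X1 coeff_S)
  next
    case (Suc j)
    have e1: "int (Suc b choose Suc j) = int (b choose j) + int (b choose Suc j)" by simp
    have e2: "int ((Suc a + Suc j) choose Suc j) = int ((Suc a + j) choose j) + int ((a + Suc j) choose Suc j)"
      by simp
    show ?thesis unfolding Suc coeff_diff coeff_add coeff_X1 coeff_S e1 e2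
      by (simp add: algebra_simps)
  qed
qed

lemma gen3: fixes x P1 P2 P3 :: "'a::comm_ring_1"
  shows "x * (x^a * P1 + x^(Suc a) * P2 - x^a * P3) = x^(Suc a) * (P1 + x * P2 - P3)"
  by (simp add: algebra_simps)

lemma FQ: "F p q = [:1,1:] ^ p * S p q"
proof (induction p arbitrary: q)
  case 0
  show ?case
  proof (induction q)
    case 0 then show ?case by (simp add: F00 S0)
  next
    case (Suc q) then show ?case by (simp add: F0S SA)
  qed
next
  case (Suc a)
  note IHa = Suc.IH
  show ?case
  proof (induction q)
    case 0 then show ?case using IHa[of 0] by (simp add: FS0 S0)
  next
    case (Suc b)
    have "F (Suc a) (Suc b) = [:1,1:] * (F a (Suc b) + F (Suc a) b - F a b)" by (rule FSS)
    also have "\<dots> = [:1,1:] * ([:1,1:]^a * S a (Suc b) + [:1,1:]^(Suc a) * S (Suc a) b - [:1,1:]^a * S a b)"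
      using Suc.IH IHa[of "Suc b"] IHa[of b] by simp
    also have "\<dots> = [:1,1:]^(Suc a) * (S a (Suc b) + [:1,1:] * S (Suc a) b - S a b)" by (rule gen3)
    also have "\<dots> = [:1,1:]^(Suc a) * S (Suc a) (Suc b)" by (simp add: SB)
    finally show ?case .
  qed
qed

theorem theorem3p1:
  fixes p q :: nat
  assumes "p \<le> q"
  shows "F p q = [:1, 1:] ^ p * (\<Sum>k = 0..q. monom (int ((q choose k) * ((p + k) choose k))) k)"
  using FQ[of p q] unfolding S_def .

end
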